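(* If $\mathcal A_i$ is a yes-instance of \textsc{Restricted Subset Sum} for some $i\in\{0,\dots,t-1\}$, then there exists a set of items $\mathcal S\subseteq\mathcal X\cup\mathcal Y\cup\mathcal Z$ with $w(\mathcal S)\le W$ and $p(\mathcal S)\ge P$.
   Context: Let $n\ge1$, $B_n=\sum_{j=1}^{3n}(3n+1)^j$, $\widetilde{\mathcal A}_n=\{(3n+1)^{j_1}+(3n+1)^{j_2}+(3n+1)^{j_3}: j_1,j_2,j_3\in\{1,\dots,3n\}\}$. A set $\mathcal A=\{a_1,\dots,a_{3n}\}$ of $3n$ integers from $\widetilde{\mathcal A}_n$ with $\sum_j a_j=3B_n$ is a yes-instance of \textsc{Restricted Subset Sum} if some $\mathcal A^*\subseteq\mathcal A$ with $|\mathcal A^*|=n$ has $\sum_{a\in\mathcal A^*}a=B_n$. Let $t$ be a power of two, $\lg$ the base-2 logarithm, and for $i\in\{0,\dots,t-1\}$ let $\mathcal A_i=\{a^i_1,\dots,a^i_{3n}\}$ be such instances. Let $X=3tnB_n$, $B=B_n+nX$, $Y=3t^2nB$, $Z=(\lg t)^2Y^2 3^{(\lg t)^2}$, $T=\sum_{k=0}^{(\lg t)^2-1}3^k$, and fix a bijection $f:\{0,\dots,\lg t-1\}^2\to\{0,\dots,(\lg t)^2-1\}$. Items (weight $w$, profit $p$): encoding items $x^i_j$ ($0\le i\le t-1$, $1\le j\le 3n$) with $w=X+a^i_j$, $p=X+a^i_j+3iB$, forming $\mathcal X$; quadratization items forming $\mathcal Y$: for $0\le k<\ell\le\lg t-1$,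 $y^{1,0}_{k,\ell}$ with $w=p=3^{f(k,\ell)}Y$, $y^{0,1}_{k,\ell}$ with $w=p=3^{f(\ell,k)}Y$, $y^{1,1}_{k,\ell}$ with $w=(3^{f(k,\ell)}+3^{f(\ell,k)})Y$, $p=w+2^{k+\ell}\cdot9nB$, and for $0\le k\le\lg t-1$, $y^{1,1}_{k,k}$ with $w=3^{f(k,k)}Y$, $p=w+2^{2k}\cdot4.5nB+2^k\cdot1.5nB$; index items forming $\mathcal Z$: for $0\le k\le\lg t-1$, $z^0_k$ with $w=p=2^kZ+\sum_{\ell=0}^{\lg t-1}3^{f(k,\ell)}Y$ and $z^1_k$ with $w=p=2^kZ+2^k\cdot 3B$. For a set $\mathcal S$ of items, $w(\mathcal S)=\sum_{x\in\mathcal S}w(x)$, $p(\mathcal S)=\sum_{x\in\mathcal S}p(x)$. Finally $W=(t-1)Z+TY+(3t-2)B$ and $P=W+\binom{t}{2}\cdot 9nB$. *)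

theory Defs
  imports Complex_Main
begin

definition Bn :: "nat \<Rightarrow> nat" where
  "Bn n = (\<Sum>j=1..3*n. (3*n+1)^j)"

definition Atilde :: "nat \<Rightarrow> nat set" where
  "Atilde n = {(3*n+1)^j1 + (3*n+1)^j2 + (3*n+1)^j3 | j1 j2 j3.
                 j1 \<in> {1..3*n} \<and> j2 \<in> {1..3*n} \<and> j3 \<in> {1..3*n}}"

definition RSS_instance :: "nat \<Rightarrow> (nat \<Rightarrow> nat) \<Rightarrow> bool" where
  "RSS_instance n a \<longleftrightarrow> inj_on a {1..3*n} \<and> (\<forall>j\<in>{1..3*n}. a j \<in> Atilde n)
      \<and> (\<Sum>j=1..3*n. a j) = 3 * Bn n"

definition RSS_yes :: "nat \<Rightarrow> (nat \<Rightarrow> nat) \<Rightarrow> bool" where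
  "RSS_yes n a \<longleftrightarrow> RSS_instance n a \<and>
      (\<exists>J. J \<subseteq> {1..3*n} \<and> card J = n \<and> (\<Sum>j\<in>J. a j) = Bn n)"

definition lg :: "nat \<Rightarrow> nat" where
  "lg t = nat \<lfloor>log 2 (real t)\<rfloor>"

definition cX :: "nat \<Rightarrow> nat \<Rightarrow> real" where
  "cX n t = 3 * real t * real n * real (Bn n)"

definition cB :: "nat \<Rightarrow> nat \<Rightarrow> real" where
  "cB n t = real (Bn n) + real n * cX n t"

definition cY :: "nat \<Rightarrow> nat \<Rightarrow> real" where
  "cY n t = 3 * (real t)^2 * real n * cB n t"

definition cZ :: "nat \<Rightarrow> nat \<Rightarrow> real" where
  "cZ n t = real ((lg t)^2) * (cY n t)^2 * 3 ^ ((lg t)^2)"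

definition cT :: "nat \<Rightarrow> real" where
  "cT t = (\<Sum>k<(lg t)^2. 3 ^ k)"

definition cW :: "nat \<Rightarrow> nat \<Rightarrow> real" where
  "cW n t = (real t - 1) * cZ n t + cT t * cY n t + (3 * real t - 2) * cB n t"

definition cP :: "nat \<Rightarrow> nat \<Rightarrow> real" where
  "cP n t = cW n t + real (t choose 2) * 9 * real n * cB n t"

datatype item =
    XI nat nat
  | Y10 nat nat
  | Y01 nat nat
  | Y11 nat nat
  | Z0 nat
  | Z1 nat

definition Xitems :: "nat \<Rightarrow> nat \<Rightarrow> item set" where
  "Xitems n t = {XI i j | i j. i < t \<and> j \<in> {1..3*n}}"

definition Yitems :: "nat \<Rightarrow> item set" where
  "Yitems t = {Y10 k l | k l. k < l \<and> l < lg t} \<union> {Y01 k l | k l. k < l \<and> l < lg t}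
     \<union> {Y11 k l | k l. k < l \<and> l < lg t} \<union> {Y11 k k | k. k < lg t}"

definition Zitems :: "nat \<Rightarrow> item set" where
  "Zitems t = {Z0 k | k. k < lg t} \<union> {Z1 k | k. k < lg t}"

fun weight :: "nat \<Rightarrow> nat \<Rightarrow> (nat \<Rightarrow> nat \<Rightarrow> nat) \<Rightarrow> (nat \<times> nat \<Rightarrow> nat) \<Rightarrow> item \<Rightarrow> real" where
  "weight n t a f (XI i j) = cX n t + real (a i j)"
| "weight n t a f (Y10 k l) = 3 ^ f (k, l) * cY n t"
| "weight n t a f (Y01 k l) = 3 ^ f (l, k) * cY n t"
| "weight n t a f (Y11 k l) =
     (if k = l then 3 ^ f (k, k) * cY n t else (3 ^ f (k, l) + 3 ^ f (l, k)) * cY n t)"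
| "weight n t a f (Z0 k) = 2 ^ k * cZ n t + (\<Sum>l<lg t. 3 ^ f (k, l) * cY n t)"
| "weight n t a f (Z1 k) = 2 ^ k * cZ n t + 2 ^ k * 3 * cB n t"

fun profit :: "nat \<Rightarrow> nat \<Rightarrow> (nat \<Rightarrow> nat \<Rightarrow> nat) \<Rightarrow> (nat \<times> nat \<Rightarrow> nat) \<Rightarrow> item \<Rightarrow> real" where
  "profit n t a f (XI i j) = cX n t + real (a i j) + 3 * real i * cB n t"
| "profit n t a f (Y10 k l) = weight n t a f (Y10 k l)"
| "profit n t a f (Y01 k l) = weight n t a f (Y01 k l)"
| "profit n t a f (Y11 k l) =
     (if k = l then weight n t a f (Y11 k k) + 2 ^ (2*k) * 4.5 * real n * cB n t
                     + 2 ^ k * 1.5 * real n * cB n t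
      else weight n t a f (Y11 k l) + 2 ^ (k + l) * 9 * real n * cB n t)"
| "profit n t a f (Z0 k) = weight n t a f (Z0 k)"
| "profit n t a f (Z1 k) = weight n t a f (Z1 k)"

end

theory Submission imports Defs begin

lemma lg_pow2: "lg (2^m) = m"
  unfolding lg_def by simp

lemma bin_sum: "(\<Sum>k<L. (i div 2^k mod 2) * 2^k) = (i::nat) mod 2^L"
proof (induction L)
  case 0 then show ?case by simp
next
  case (Suc L)
  have "i mod 2^(Suc L) = i mod (2^L * 2)" by (simp add: mult.commute)
  also have "\<dots> = 2^L * (i div 2^L mod 2) + i mod 2^L" by (rule mod_mult2_eq)
  finally show ?case using Suc by simp
qed

lemma gauss_tail: "i < t \<Longrightarrow> 2 * (\<Sum>k\<in>{i+1..<t}. real k) = real t * (real t - 1) - real i * (real i + 1)"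
proof (induction t)
  case 0 then show ?case by simp
next
  case (Suc t)
  show ?case
  proof (cases "i < t")
    case True
    have "{i+1..<Suc t} = insert t {i+1..<t}" using True by auto
    then have "(\<Sum>k\<in>{i+1..<Suc t}. real k) = real t + (\<Sum>k\<in>{i+1..<t}. real k)" by simp
    then show ?thesis using Suc True by (simp add: algebra_simps)
  next
    case False
    then have "i = t" using Suc by simp
    then show ?thesis by (simp add: algebra_simps)
  qed
qed

lemma choose2_real: "real (t choose 2) * 2 = real t * (real t - 1)"
proof -
  have "even (t * (t - 1))" by (cases "even t") auto
  then have "(t choose 2) * 2 = t * (t - 1)" by (simp add: choose_two)
  then have "real ((t choose 2) * 2) = real (t * (t - 1))" by simp
  then show ?thesis by (cases t) (simp_all add: of_nat_diff algebra_simps)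
qed


lemma geo2: "(\<Sum>k<L. (2::real)^k) = 2^L - 1"
  by (induction L) simp_all

theorem lemma7:
  fixes n t i :: nat and a :: "nat \<Rightarrow> nat \<Rightarrow> nat" and f :: "nat \<times> nat \<Rightarrow> nat"
  assumes "n \<ge> 1"
    and "\<exists>m. t = 2 ^ m"
    and "\<forall>i'<t. RSS_instance n (a i')"
    and "bij_betw f ({0..<lg t} \<times> {0..<lg t}) {0..<(lg t)^2}"
    and "i < t"
    and "RSS_yes n (a i)"
  shows "\<exists>S. S \<subseteq> Xitems n t \<union> Yitems t \<union> Zitems t
           \<and> (\<Sum>x\<in>S. weight n t a f x) \<le> cW n t
           \<and> (\<Sum>x\<in>S. profit n t a f x) \<ge> cP n t"
proof -
  obtain m where tm: "t = 2^m" using assms(2) by auto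
  define L where "L = lg t"
  have tL: "t = 2^L" using tm by (simp add: L_def lg_pow2)
  obtain J where J: "J \<subseteq> {1..3*n}" "card J = n" "(\<Sum>j\<in>J. a i j) = Bn n"
    using assms(6) unfolding RSS_yes_def by blast
  define wt where "wt = weight n t a f"
  define pr where "pr = profit n t a f"
  define bb where "bb k = (i div 2^k mod 2 = 1)" for k
  define \<beta> where "\<beta> k = real (i div 2^k mod 2)" for k
  have \<beta>01: "\<beta> k = (if bb k then 1 else 0)" for k
    unfolding \<beta>_def bb_def by auto
  have isum: "real i = (\<Sum>k<L. \<beta> k * 2^k)"
  proof -
    have "i mod 2^L = i" using assms(5) tL by simp
    then have "(\<Sum>k<L. (i div 2^k mod 2) * 2^k) = i" by (simp add: bin_sum)
    then have "real (\<Sum>k<L. (i div 2^k mod 2) * 2^k) = real i" by simp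
    then show ?thesis unfolding \<beta>_def by simp
  qed
  define cb where "cb = cB n t"
  define g where "g p = (3::real)^(f p)" for p
  define ex where "ex = (\<lambda>(k,l). 4.5*real n*cb*\<beta> k*\<beta> l*2^k*2^l + (if k=l then 1.5*real n*cb*\<beta> k*2^k else 0))"
  define \<phi> where "\<phi> = (\<lambda>(k,l). if k<l then (if bb l then Y11 k l else Y10 k l)
       else if k = l then Y11 k k else (if bb l then Y11 l k else Y01 l k))"
  define Q where "Q = {(k,l). k<L \<and> l<L \<and> bb k}"
  define SX1 where "SX1 = (\<lambda>(i',j). XI i' j) ` ({i+1..<t} \<times> {1..3*n})"
  define SX2 where "SX2 = XI i ` J"
  define SZ where "SZ = (\<lambda>k. if bb k then Z1 k else Z0 k) ` {..<L}"
  define SY where "SY = \<phi> ` Q"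
  have finQ: "finite Q"
    by (rule finite_subset[of _ "{..<L} \<times> {..<L}"]) (auto simp: Q_def)
  have finJ: "finite J" using J(1) finite_subset by blast
  have fin: "finite SX1" "finite SX2" "finite SZ" "finite SY"
    using finQ finJ by (auto simp: SX1_def SX2_def SZ_def SY_def)
  have fiber: "{q \<in> Q. \<phi> q = \<phi> (k,l)} = (if k \<noteq> l \<and> bb l then {(k,l),(l,k)} else {(k,l)})"
    if "(k,l) \<in> Q" for k l
    using that unfolding Q_def \<phi>_def by (auto split: if_splits)
  have fibw: "(\<Sum>q\<in>{q \<in> Q. \<phi> q = \<phi> p}. g q * cY n t) = wt (\<phi> p)"
   and fibp: "(\<Sum>q\<in>{q \<in> Q. \<phi> q = \<phi> p}. g q * cY n t + ex q) = pr (\<phi> p)"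
    if "p \<in> Q" for p
  proof -
    obtain k l where p: "p = (k,l)" by (cases p)
    have kb: "bb k" using that p by (simp add: Q_def)
    have "k < l \<or> k = l \<or> l < k" by auto
    then have "(\<Sum>q\<in>{q \<in> Q. \<phi> q = \<phi> p}. g q * cY n t) = wt (\<phi> p)
       \<and> (\<Sum>q\<in>{q \<in> Q. \<phi> q = \<phi> p}. g q * cY n t + ex q) = pr (\<phi> p)"
    proof (elim disjE)
      assume kl: "k < l"
      show ?thesis
      proof (cases "bb l")
        case True
        then show ?thesis using fiber[of k l] that p kl kb
          by (simp add: \<phi>_def wt_def pr_def g_def ex_def \<beta>01 cb_def power_add algebra_simps)
      next
        case False
        then show ?thesis using fiber[of k l] that p kl kb
          by (simp add: \<phi>_def wt_def pr_def g_def ex_def \<beta>01 cb_def power_add algebra_simps)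
      qed
    next
      assume kl: "k = l"
      have e4: "(2::real)^l * 2^l = 4^l" by (simp flip: power_mult_distrib)
      have e5: "(2::real)^(l*2) = 4^l" using e4 by (simp add: power_add[symmetric] mult_2_right)
      show ?thesis using fiber[of k l] that p kb kl e4 e5
          by (simp add: \<phi>_def wt_def pr_def g_def ex_def \<beta>01 cb_def power_add algebra_simps)
    next
      assume kl: "l < k"
      show ?thesis
      proof (cases "bb l")
        case True
        then show ?thesis using fiber[of k l] that p kl kb
          by (simp add: \<phi>_def wt_def pr_def g_def ex_def \<beta>01 cb_def power_add algebra_simps)
      next
        case False
        then show ?thesis using fiber[of k l] that p kl kb
          by (simp add: \<phi>_def wt_def pr_def g_def ex_def \<beta>01 cb_def power_add algebra_simps)
      qed
    qed
    then show "(\<Sum>q\<in>{q \<in> Q. \<phi> q = \<phi> p}. g q * cY n t) = wt (\<phi> p)"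
      and "(\<Sum>q\<in>{q \<in> Q. \<phi> q = \<phi> p}. g q * cY n t + ex q) = pr (\<phi> p)" by auto
  qed
  have SYw: "sum wt SY = (\<Sum>q\<in>Q. g q * cY n t)"
  proof -
    have "(\<Sum>q\<in>Q. g q * cY n t) = (\<Sum>y\<in>SY. \<Sum>q\<in>{q. q \<in> Q \<and> \<phi> q = y}. g q * cY n t)"
      unfolding SY_def by (rule sum.image_gen[OF finQ])
    also have "\<dots> = sum wt SY"
      by (rule sum.cong) (auto simp: SY_def fibw)
    finally show ?thesis by simp
  qed
  have SYp: "sum pr SY = (\<Sum>q\<in>Q. g q * cY n t + ex q)"
  proof -
    have "(\<Sum>q\<in>Q. g q * cY n t + ex q) = (\<Sum>y\<in>SY. \<Sum>q\<in>{q. q \<in> Q \<and> \<phi> q = y}. g q * cY n t + ex q)"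
      unfolding SY_def by (rule sum.image_gen[OF finQ])
    also have "\<dots> = sum pr SY"
      by (rule sum.cong) (auto simp: SY_def fibp)
    finally show ?thesis by simp
  qed
  define R where "R k = (\<Sum>l<L. g (k,l))" for k
  have QS: "Q = Sigma {k \<in> {..<L}. bb k} (\<lambda>_. {..<L})" unfolding Q_def by auto
  have Qw: "(\<Sum>q\<in>Q. g q * cY n t) = (\<Sum>k<L. if bb k then R k else 0) * cY n t"
  proof -
    have "(\<Sum>q\<in>Q. g q * cY n t) = (\<Sum>k\<in>{k \<in> {..<L}. bb k}. \<Sum>l<L. g (k,l) * cY n t)"
      unfolding QS by (subst sum.Sigma) auto
    also have "\<dots> = (\<Sum>k\<in>{k \<in> {..<L}. bb k}. R k * cY n t)"
      by (simp add: R_def sum_distrib_right)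
    also have "\<dots> = (\<Sum>k<L. if bb k then R k * cY n t else 0)"
      by (rule sum.inter_filter) simp
    also have "\<dots> = (\<Sum>k<L. if bb k then R k else 0) * cY n t"
      by (simp add: sum_distrib_right, rule sum.cong, auto)
    finally show ?thesis .
  qed
  have Qex: "(\<Sum>q\<in>Q. ex q) = 4.5*real n*cb*(real i)^2 + 1.5*real n*cb*real i"
  proof -
    have "(\<Sum>q\<in>Q. ex q) = (\<Sum>q\<in>{..<L}\<times>{..<L}. ex q)"
      proof (rule sum.mono_neutral_left)
      show "\<forall>q\<in>{..<L}\<times>{..<L} - Q. ex q = 0"
      proof
        fix q assume "q \<in> {..<L}\<times>{..<L} - Q"
        then obtain k l where q: "q = (k,l)" "\<not> bb k" by (auto simp: Q_def)
        then have "\<beta> k = 0" by (simp add: \<beta>01)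
        then show "ex q = 0" using q by (cases "k = l") (simp_all add: ex_def)
      qed
    qed (auto simp: Q_def)
    also have "\<dots> = (\<Sum>k<L. \<Sum>l<L. ex (k,l))"
      by (simp add: sum.cartesian_product)
    also have "\<dots> = (\<Sum>k<L. \<Sum>l<L. 4.5*real n*cb*(\<beta> k*2^k)*(\<beta> l*2^l))
                    + (\<Sum>k<L. 1.5*real n*cb*(\<beta> k*2^k))"
      by (simp add: ex_def sum.distrib algebra_simps)
    also have "\<dots> = 4.5*real n*cb*(\<Sum>k<L. \<beta> k*2^k)*(\<Sum>l<L. \<beta> l*2^l)
                    + 1.5*real n*cb*(\<Sum>k<L. \<beta> k*2^k)"
    proof -
      have sp: "(\<Sum>k<L. \<beta> k*2^k)*(\<Sum>l<L. \<beta> l*2^l) = (\<Sum>k<L. \<Sum>l<L. (\<beta> k*2^k)*(\<beta> l*2^l))"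
        by (rule sum_product)
      have "4.5*real n*cb*(\<Sum>k<L. \<beta> k*2^k)*(\<Sum>l<L. \<beta> l*2^l)
          = 4.5*real n*cb*((\<Sum>k<L. \<beta> k*2^k)*(\<Sum>l<L. \<beta> l*2^l))" by (simp only: mult.assoc)
      also have "\<dots> = (\<Sum>k<L. \<Sum>l<L. 4.5*real n*cb*(\<beta> k*2^k)*(\<beta> l*2^l))"
        unfolding sp by (simp add: sum_distrib_left mult.assoc)
      finally show ?thesis by (simp add: sum_distrib_left mult.assoc)
    qed
    finally show ?thesis by (simp add: isum[symmetric] power2_eq_square)
  qed
  have TR: "(\<Sum>k<L. R k) = cT t"
  proof -
    have "(\<Sum>k<L. R k) = (\<Sum>p\<in>{0..<L}\<times>{0..<L}. (3::real)^(f p))"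
      by (simp add: R_def g_def sum.cartesian_product lessThan_atLeast0)
    also have "\<dots> = (\<Sum>m\<in>{0..<L^2}. (3::real)^m)"
      using assms(4) unfolding L_def by (rule sum.reindex_bij_betw)
    finally show ?thesis by (simp add: cT_def L_def lessThan_atLeast0)
  qed
  have bsum: "(\<Sum>k<L. if bb k then (2::real)^k else 0) = real i"
    unfolding isum by (rule sum.cong) (auto simp: \<beta>01)
  have injZ: "inj_on (\<lambda>k. if bb k then Z1 k else Z0 k) {..<L}"
    by (auto simp: inj_on_def split: if_splits)
  have SZw: "sum wt SZ = (2^L - 1) * cZ n t + 3 * cb * real i + (\<Sum>k<L. if bb k then 0 else R k) * cY n t"
  proof -
    have "sum wt SZ = (\<Sum>k<L. 2^k * cZ n t + ((if bb k then 2^k else 0) * 3 * cb + (if bb k then 0 else R k) * cY n t))"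
      unfolding SZ_def
      by (subst sum.reindex[OF injZ]) (auto intro!: sum.cong simp: wt_def cb_def R_def g_def L_def sum_distrib_right)
    also have "\<dots> = (\<Sum>k<L. 2^k) * cZ n t + (\<Sum>k<L. if bb k then (2::real)^k else 0) * 3 * cb
          + (\<Sum>k<L. if bb k then 0 else R k) * cY n t"
      by (simp add: sum.distrib sum_distrib_right)
    finally show ?thesis by (simp add: geo2 bsum)
  qed
  have SZp: "sum pr SZ = sum wt SZ"
    unfolding SZ_def by (rule sum.cong) (auto simp: wt_def pr_def)
  have rowsum: "(\<Sum>j\<in>{1..3*n}. real (a i' j)) = 3 * real (Bn n)" if "i' < t" for i'
  proof -
    have "(\<Sum>j=1..3*n. a i' j) = 3 * Bn n" using assms(3) that unfolding RSS_instance_def by blast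
    then have "real (\<Sum>j=1..3*n. a i' j) = real (3 * Bn n)" by simp
    then show ?thesis by simp
  qed
  have injX1: "inj_on (\<lambda>(i',j). XI i' j) ({i+1..<t} \<times> {1..3*n})"
    by (auto simp: inj_on_def)
  have X1re: "sum h SX1 = (\<Sum>i'\<in>{i+1..<t}. \<Sum>j\<in>{1..3*n}. h (XI i' j))" for h :: "item \<Rightarrow> real"
    unfolding SX1_def by (subst sum.reindex[OF injX1]) (simp add: comp_def sum.cartesian_product split_def)
  have SX1w: "sum wt SX1 = (\<Sum>i'\<in>{i+1..<t}. 3*real n*cX n t + 3*real (Bn n))"
  proof -
    have "sum wt SX1 = (\<Sum>i'\<in>{i+1..<t}. \<Sum>j\<in>{1..3*n}. cX n t + real (a i' j))"
      unfolding X1re by (simp add: wt_def)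
    also have "\<dots> = (\<Sum>i'\<in>{i+1..<t}. 3*real n*cX n t + 3*real (Bn n))"
      by (rule sum.cong) (auto simp: sum.distrib rowsum[simplified])
    finally show ?thesis .
  qed
  have SX1p: "sum pr SX1 = sum wt SX1 + 9*real n*cb*(\<Sum>i'\<in>{i+1..<t}. real i')"
  proof -
    have "sum pr SX1 = (\<Sum>i'\<in>{i+1..<t}. \<Sum>j\<in>{1..3*n}. (cX n t + real (a i' j)) + 3 * real i' * cb)"
      unfolding X1re by (simp add: pr_def cb_def)
    also have "\<dots> = (\<Sum>i'\<in>{i+1..<t}. \<Sum>j\<in>{1..3*n}. (cX n t + real (a i' j))) + (\<Sum>i'\<in>{i+1..<t}. 9 * real n * cb * real i')"
      by (simp add: sum.distrib algebra_simps)
    also have "(\<Sum>i'\<in>{i+1..<t}. \<Sum>j\<in>{1..3*n}. (cX n t + real (a i' j))) = sum wt SX1"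
      unfolding X1re by (simp add: wt_def)
    finally show ?thesis by (simp add: sum_distrib_left)
  qed
  have injX2: "inj_on (XI i) J" by (auto simp: inj_on_def)
  have SX2w: "sum wt SX2 = real n * cX n t + real (Bn n)"
  proof -
    have "sum wt SX2 = (\<Sum>j\<in>J. cX n t + real (a i j))"
      unfolding SX2_def by (simp add: sum.reindex[OF injX2] wt_def)
    also have "\<dots> = real n * cX n t + real (\<Sum>j\<in>J. a i j)" by (simp add: sum.distrib J(2))
    finally show ?thesis by (simp add: J(3))
  qed
  have SX2p: "sum pr SX2 = sum wt SX2 + 3 * real n * real i * cb"
  proof -
    have "sum pr SX2 = (\<Sum>j\<in>J. (cX n t + real (a i j)) + 3 * real i * cb)"
      unfolding SX2_def by (simp add: sum.reindex[OF injX2] pr_def cb_def)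
    also have "\<dots> = sum wt SX2 + 3 * real n * real i * cb"
      unfolding SX2_def by (simp add: sum.distrib sum.reindex[OF injX2] wt_def J(2))
    finally show ?thesis .
  qed
  define S where "S = SX1 \<union> SX2 \<union> SZ \<union> SY"
  have disj: "SX1 \<inter> SX2 = {}" "(SX1 \<union> SX2) \<inter> SZ = {}" "(SX1 \<union> SX2 \<union> SZ) \<inter> SY = {}"
  proof -
    show "SX1 \<inter> SX2 = {}" by (auto simp: SX1_def SX2_def)
    show "(SX1 \<union> SX2) \<inter> SZ = {}" by (auto simp: SX1_def SX2_def SZ_def split: if_splits)
    show "(SX1 \<union> SX2 \<union> SZ) \<inter> SY = {}"
      by (auto simp: SX1_def SX2_def SZ_def SY_def \<phi>_def split: if_splits)
  qed
  have sumS: "sum h S = sum h SX1 + sum h SX2 + sum h SZ + sum h SY" for h :: "item \<Rightarrow> real"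
    unfolding S_def using fin disj by (simp add: sum.union_disjoint)
  have sub: "S \<subseteq> Xitems n t \<union> Yitems t \<union> Zitems t"
  proof -
    have "SX1 \<subseteq> Xitems n t" using assms(5) by (auto simp: SX1_def Xitems_def)
    moreover have "SX2 \<subseteq> Xitems n t" using assms(5) J(1) by (auto simp: SX2_def Xitems_def)
    moreover have "SZ \<subseteq> Zitems t" by (auto simp: SZ_def Zitems_def L_def)
    moreover have "SY \<subseteq> Yitems t"
    proof
      fix y assume "y \<in> SY"
      then obtain k l where kl: "(k,l) \<in> Q" "y = \<phi> (k,l)" by (auto simp: SY_def)
      then have kL: "k < lg t" "l < lg t" by (auto simp: Q_def L_def)
      consider "k < l" | "k = l" | "l < k" by arith
      then show "y \<in> Yitems t"
      proof cases
        case 1 then show ?thesis using kl kL by (cases "bb l") (auto simp: \<phi>_def Yitems_def)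
      next
        case 2 then show ?thesis using kl kL by (auto simp: \<phi>_def Yitems_def)
      next
        case 3 then show ?thesis using kl kL by (cases "bb l") (auto simp: \<phi>_def Yitems_def)
      qed
    qed
    ultimately show ?thesis by (auto simp: S_def)
  qed
  have Rsplit: "(\<Sum>k<L. if bb k then R k else 0) + (\<Sum>k<L. if bb k then 0 else R k) = cT t"
    by (simp add: TR[symmetric] sum.distrib[symmetric], rule sum.cong, auto)
  have ti: "real (card {i+1..<t}) = real t - real i - 1" using assms(5) by (simp add: of_nat_diff)
  have Wexact: "sum wt S = cW n t"
  proof -
    have "sum wt S = (real t - real i - 1) * (3*real n*cX n t + 3*real (Bn n)) + (real n * cX n t + real (Bn n))
        + ((2^L - 1) * cZ n t + 3 * cb * real i + (\<Sum>k<L. if bb k then 0 else R k) * cY n t)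
        + (\<Sum>k<L. if bb k then R k else 0) * cY n t"
      using sumS[of wt] SX1w SX2w SZw SYw Qw ti by simp
    also have "\<dots> = (real t - 1) * cZ n t + cT t * cY n t + (3 * real t - 2) * cB n t"
    proof -
      have RsY: "(\<Sum>k<L. if bb k then 0 else R k) * cY n t + (\<Sum>k<L. if bb k then R k else 0) * cY n t = cT t * cY n t"
        by (metis Rsplit distrib_right add.commute)
      have t2: "(2::real)^L = real t" using tL by simp
      show ?thesis using RsY t2 unfolding cb_def cB_def by (simp add: algebra_simps)
    qed
    finally show ?thesis by (simp add: cW_def)
  qed
  have Pexact: "sum pr S = cP n t"
  proof -
    have "sum pr S = sum wt S + 9*real n*cb*(\<Sum>i'\<in>{i+1..<t}. real i') + 3 * real n * real i * cb
        + (4.5*real n*cb*(real i)^2 + 1.5*real n*cb*real i)"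
      using sumS[of pr] sumS[of wt] SX1p SX2p SZp SYp SYw by (simp add: sum.distrib Qex)
    also have "(\<Sum>i'\<in>{i+1..<t}. real i') = real (t choose 2) - real i * (real i + 1) / 2"
      using gauss_tail[OF assms(5)] choose2_real[of t] by simp
    finally have "sum pr S + (real i * (real n * (cB n t * 9)) + real i * (real i * (real n * (cB n t * 9)))) / 2 = cW n t + (real n * (cB n t * (9 * real (t choose 2))) + (real i * (real n * (cB n t * 9)) / 2 + real i * (real i * (real n * (cB n t * 9))) / 2))" using Wexact unfolding cb_def by (simp add: algebra_simps power2_eq_square)
    then show ?thesis unfolding cP_def by (simp add: algebra_simps add_divide_distrib)
  qed
  show ?thesis using sub Wexact Pexact
    by (intro exI[of _ S]) (simp add: wt_def pr_def)
qed

end
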